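(* Fix any environment trace $e(\cdot)$ with time proportions $(\pi^e)_{e\in\mathcal E}$ and any arrival trace $N(\cdot)$ with traffic load $\rho=\lim_{t\to\infty}N(t)/t$. If $\rho\notin\mathcal R(\mathcal S^e,\pi^e,e\in\mathcal E)$, then under any admissible schedule $S(\cdot)$ the workload satisfies $$\limsup_{t\to\infty}\frac{X_q(t)}{t}>0\quad\text{for at least one queue } q\in\mathcal Q .$$
   Context: Fix integers $Q\ge1$ and $E\ge1$; queues are indexed by $q\in\mathcal Q=\{1,\dots,Q\}$ and environment states by $e\in\mathcal E=\{1,\dots,E\}$. For each $e\in\mathcal E$, $\mathcal S^e\subset\mathbb R^Q$ is a finite nonempty set of service vectors. Components may be negative: $S_q>0$ drains queue $q$ at rate $S_q$, while $S_q<0$ feeds queue $q$ at rate $-S_q$. Each $\mathcal S^e$ is complete: if $S\in\mathcal S^e$ and $S_q>0$, then the vector obtained from $S$ by replacing $S_q$ with $0$ also lies in $\mathcal S^e$. An environment trace is a measurable map $e:[0,\infty)\to\mathcal E$ such that $\pi^e=\lim_{t\to\infty}\frac1t\int_0^t\mathbf 1\{e(z)=e\}\,dz$ exists for each $e$, with $\pi^e>0$ and $\sum_e\pi^e=1$. An arrival trace is the cumulative workload arrival $N(t)=\int_0^tA(z)\,dz\in\mathbb R^Q_{\ge0}$. The rate $A$ may contain Dirac $\delta$-jumps, so $N$ is componentwise nondecreasing with left limits. Its traffic load $\rho=\lim_{t\to\infty}N(t)/t\in\mathbb R^Q_{\ge0}$ is assumed to exist. No other assumption is made on the trace, which may be adversarial.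 An admissible schedule is a measurable map $S:[0,\infty)\to\mathbb R^Q$ with $S(t)\in\mathcal S^{e(t)}$ for all $t$. The resulting workload is $X(t)=X(0)+N(t)-\int_0^tS(z)\,dz$, where $X(0)\in\mathbb R^Q_{\ge0}$, and it satisfies $X(t)\in\mathbb R^Q_{\ge0}$ for all $t$. The stability region is $$\mathcal R(\mathcal S^e,\pi^e,e\in\mathcal E)=\Big\{\rho\in\mathbb R^Q_{\ge0}:\rho\le\sum_{e\in\mathcal E}\pi^e\sum_{S\in\mathcal S^e}\phi^e_S S\ \text{for some } \phi^e_S\ge0 \text{ with } \sum_{S\in\mathcal S^e}\phi^e_S=1,\ e\in\mathcal E\Big\},$$ where the inequality is componentwise. *)

theory Defs
  imports "HOL-Analysis.Analysis"
begin

definition stab_region ::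
  "('e::finite \<Rightarrow> ('q::finite \<Rightarrow> real) set) \<Rightarrow> ('e \<Rightarrow> real) \<Rightarrow> ('q \<Rightarrow> real) set" where
  "stab_region Sset piE =
     {rho. (\<forall>q. 0 \<le> rho q) \<and>
        (\<exists>phi :: 'e \<Rightarrow> ('q \<Rightarrow> real) \<Rightarrow> real.
           (\<forall>e. \<forall>S\<in>Sset e. 0 \<le> phi e S) \<and>
           (\<forall>e. (\<Sum>S\<in>Sset e. phi e S) = 1) \<and>
           (\<forall>q. rho q \<le> (\<Sum>e\<in>UNIV. piE e * (\<Sum>S\<in>Sset e. phi e S * S q))))}"

definition complete_service_set :: "('q \<Rightarrow> real) set \<Rightarrow> bool" where
  "complete_service_set A \<longleftrightarrow> (\<forall>S\<in>A. \<forall>q. 0 < S q \<longrightarrow> S(q := 0) \<in> A)"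

end

theory Submission
  imports Defs "HOL-Real_Asymp.Real_Asymp"
begin


lemma simul_subseq:
  fixes f :: "'i \<Rightarrow> nat \<Rightarrow> real"
  assumes "finite I" "\<And>i. i \<in> I \<Longrightarrow> bounded (range (f i))"
  shows "\<exists>r. strict_mono r \<and> (\<forall>i\<in>I. \<exists>l. (\<lambda>n. f i (r n)) \<longlonglongrightarrow> l)"
  using assms
proof (induction I rule: finite_induct)
  case empty
  show ?case by (rule exI[of _ id]) (auto simp: strict_mono_def)
next
  case (insert i I)
  then obtain r where r: "strict_mono r" "\<forall>j\<in>I. \<exists>l. (\<lambda>n. f j (r n)) \<longlonglongrightarrow> l" by auto
  have "bounded (range (f i \<circ> r))"
    using insert.prems[of i] by (rule bounded_subset) auto
  then obtain l r' where r': "strict_mono r'" "((f i \<circ> r) \<circ> r') \<longlonglongrightarrow> l"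
    using bounded_imp_convergent_subsequence by blast
  show ?case
  proof (intro exI[of _ "r \<circ> r'"] conjI ballI)
    show "strict_mono (r \<circ> r')" using r r' by (simp add: strict_mono_o)
    fix j assume "j \<in> insert i I"
    then show "\<exists>l. (\<lambda>n. f j ((r \<circ> r') n)) \<longlonglongrightarrow> l"
    proof
      assume "j = i" then show ?thesis using r' by (auto simp: o_def)
    next
      assume "j \<in> I"
      then obtain l' where "(\<lambda>n. f j (r n)) \<longlonglongrightarrow> l'" using r by auto
      from LIMSEQ_subseq_LIMSEQ[OF this r'(1)] show ?thesis by (auto simp: o_def)
    qed
  qed
qed

lemma limsup_to_lim:
  fixes f :: "real \<Rightarrow> real"
  assumes "Limsup at_top (\<lambda>t. ereal (f t)) \<le> 0" "eventually (\<lambda>t. 0 \<le> f t) at_top"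
  shows "(f \<longlongrightarrow> 0) at_top"
proof -
  have "0 \<le> Liminf at_top (\<lambda>t. ereal (f t))"
    by (rule Liminf_bounded) (use assms(2) in \<open>auto elim: eventually_mono\<close>)
  moreover have "Liminf at_top (\<lambda>t. ereal (f t)) \<le> Limsup at_top (\<lambda>t. ereal (f t))"
    by (rule Liminf_le_Limsup) simp
  ultimately have "((\<lambda>t. ereal (f t)) \<longlongrightarrow> ereal 0) at_top"
    using assms(1) by (intro Liminf_eq_Limsup) (auto simp: zero_ereal_def)
  then show ?thesis by (simp add: lim_ereal)
qed


lemma decomp:
  fixes Sset :: "'e::finite \<Rightarrow> ('q::finite \<Rightarrow> real) set"
    and env :: "real \<Rightarrow> 'e"
    and S :: "real \<Rightarrow> 'q \<Rightarrow> real"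
  assumes Sset_finite: "\<And>e. finite (Sset e)"
    and env_meas: "env \<in> measurable lborel (count_space UNIV)"
    and S_meas: "\<And>q. (\<lambda>t. S t q) \<in> borel_measurable lborel"
    and S_adm: "\<And>t. 0 \<le> t \<Longrightarrow> S t \<in> Sset (env t)"
    and A_def: "A = (\<lambda>t e s. {z. 0 \<le> z \<and> z \<le> t \<and> env z = e \<and> S z = s})"
  shows "A t e s \<in> sets lborel" "emeasure lborel (A t e s) < \<infinity>"
   "0 \<le> t \<Longrightarrow> (LINT z:{0..t}|lborel. S z q) = (\<Sum>e\<in>UNIV. \<Sum>s\<in>Sset e. measure lborel (A t e s) * s q)"
   "(LINT z:{0..t}|lborel. indicator {z. env z = e} z) = (\<Sum>s\<in>Sset e. measure lborel (A t e s))"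
proof -
  have Ameas: "A t e s \<in> sets lborel" for t e s
  proof -
    have "A t e s = {0..t} \<inter> (env -` {e} \<inter> space lborel) \<inter> (\<Inter>q. (\<lambda>z. S z q) -` {s q} \<inter> space lborel)"
      by (auto simp: A_def fun_eq_iff)
    also have "\<dots> \<in> sets lborel"
      using measurable_sets[OF env_meas, of "{e}"] measurable_sets[OF S_meas, of "{s q}" for q]
      by (intro sets.Int sets.countable_INT') auto
    finally show ?thesis .
  qed
  have Afin: "emeasure lborel (A t e s) < \<infinity>" for t e s
  proof -
    have "emeasure lborel (A t e s) \<le> emeasure lborel {0..t}"
      by (rule emeasure_mono) (auto simp: A_def)
    also have "\<dots> < \<infinity>" by (simp add: emeasure_lborel_Icc_eq)
    finally show ?thesis .
  qed
  show "A t e s \<in> sets lborel" "emeasure lborel (A t e s) < \<infinity>" by (rule Ameas, rule Afin)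
  have intg: "integrable lborel (\<lambda>z. indicator (A t e s) z * c)" for t e s and c :: real
    by (intro integrable_mult_left integrable_real_indicator Ameas Afin)
  {
    assume t: "0 \<le> t"
    have pw: "indicator {0..t} z * S z q = (\<Sum>e\<in>UNIV. \<Sum>s\<in>Sset e. indicator (A t e s) z * s q)" for z
    proof (cases "z \<in> {0..t}")
      case False
      then have "indicator (A t e s) z = (0::real)" for e s by (auto simp: A_def indicator_def)
      then show ?thesis using False by simp
    next
      case True
      have "(\<Sum>s\<in>Sset e. indicator (A t e s) z * s q) = (if e = env z then S z q else 0)" for e
      proof -
        have "(\<Sum>s\<in>Sset e. indicator (A t e s) z * s q) = (\<Sum>s\<in>Sset e. if e = env z then (if s = S z then s q else 0) else 0)"
          using True by (intro sum.cong) (auto simp: A_def indicator_def)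
        also have "\<dots> = (if e = env z then S z q else 0)"
          using S_adm[of z] True Sset_finite[of e] by (auto simp: sum.delta')
        finally show ?thesis .
      qed
      then show ?thesis using True by simp
    qed
    have "(LINT z:{0..t}|lborel. S z q) = (LINT z|lborel. (\<Sum>e\<in>UNIV. \<Sum>s\<in>Sset e. indicator (A t e s) z * s q))"
      unfolding set_lebesgue_integral_def using pw by simp
    also have "\<dots> = (\<Sum>e\<in>UNIV. \<Sum>s\<in>Sset e. measure lborel (A t e s) * s q)"
      by (subst Bochner_Integration.integral_sum, intro Bochner_Integration.integrable_sum intg,
          intro sum.cong refl, subst Bochner_Integration.integral_sum, rule intg,
          simp add: integral_mult_left_zero)
    finally show "(LINT z:{0..t}|lborel. S z q) = (\<Sum>e\<in>UNIV. \<Sum>s\<in>Sset e. measure lborel (A t e s) * s q)" .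
  }
  have pw2: "(indicator {0..t} z * indicator {z. env z = e} z :: real) = (\<Sum>s\<in>Sset e. indicator (A t e s) z * 1)" for z :: real
  proof (cases "z \<in> {0..t} \<and> env z = e")
    case False
    then have "indicator (A t e s) z = (0::real)" for s by (auto simp: A_def indicator_def)
    then show ?thesis using False by (auto simp: indicator_def)
  next
    case True
    have "(\<Sum>s\<in>Sset e. indicator (A t e s) z * (1::real)) = (\<Sum>s\<in>Sset e. if s = S z then 1 else 0)"
      using True by (intro sum.cong) (auto simp: A_def indicator_def)
    also have "\<dots> = 1"
      using S_adm[of z] True Sset_finite[of e] by (auto simp: sum.delta')
    finally show ?thesis using True by (simp add: indicator_def)
  qed
  have "(LINT z:{0..t}|lborel. indicator {z. env z = e} z) = (LINT z|lborel. (\<Sum>s\<in>Sset e. indicator (A t e s) z * (1::real)))"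
    unfolding set_lebesgue_integral_def using pw2 by simp
  also have "\<dots> = (\<Sum>s\<in>Sset e. measure lborel (A t e s))"
    by (subst Bochner_Integration.integral_sum, rule intg, simp)
  finally show "(LINT z:{0..t}|lborel. indicator {z. env z = e} z) = (\<Sum>s\<in>Sset e. measure lborel (A t e s))" .
qed


theorem proposition1:
  fixes Sset :: "'e::finite \<Rightarrow> ('q::finite \<Rightarrow> real) set"
    and env :: "real \<Rightarrow> 'e"
    and piE :: "'e \<Rightarrow> real"
    and N :: "real \<Rightarrow> 'q \<Rightarrow> real"
    and rho :: "'q \<Rightarrow> real"
    and S :: "real \<Rightarrow> 'q \<Rightarrow> real"
    and X0 :: "'q \<Rightarrow> real"
    and X :: "real \<Rightarrow> 'q \<Rightarrow> real"
  assumes Sset_finite: "\<And>e. finite (Sset e)"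
    and Sset_nonempty: "\<And>e. Sset e \<noteq> {}"
    and Sset_complete: "\<And>e. complete_service_set (Sset e)"
    and env_meas: "env \<in> measurable lborel (count_space UNIV)"
    and env_prop: "\<And>e. ((\<lambda>t. (LINT z:{0..t}|lborel. indicator {z. env z = e} z) / t)
                          \<longlongrightarrow> piE e) at_top"
    and piE_pos: "\<And>e. 0 < piE e"
    and piE_sum: "(\<Sum>e\<in>UNIV. piE e) = 1"
    and N_nonneg: "\<And>t q. 0 \<le> t \<Longrightarrow> 0 \<le> N t q"
    and N_mono: "\<And>s t q. 0 \<le> s \<Longrightarrow> s \<le> t \<Longrightarrow> N s q \<le> N t q"
    and load: "\<And>q. ((\<lambda>t. N t q / t) \<longlongrightarrow> rho q) at_top"
    and S_meas: "\<And>q. (\<lambda>t. S t q) \<in> borel_measurable lborel"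
    and S_adm: "\<And>t. 0 \<le> t \<Longrightarrow> S t \<in> Sset (env t)"
    and X0_nonneg: "\<And>q. 0 \<le> X0 q"
    and X_def: "\<And>t q. 0 \<le> t \<Longrightarrow> X t q = X0 q + N t q - (LINT z:{0..t}|lborel. S z q)"
    and X_nonneg: "\<And>t q. 0 \<le> t \<Longrightarrow> 0 \<le> X t q"
    and not_stable: "rho \<notin> stab_region Sset piE"
  shows "\<exists>q. Limsup at_top (\<lambda>t. ereal (X t q / t)) > 0"
proof (rule ccontr)
  assume H: "\<not> (\<exists>q. Limsup at_top (\<lambda>t. ereal (X t q / t)) > 0)"
  have Xlim: "((\<lambda>t. X t q / t) \<longlongrightarrow> 0) at_top" for q
  proof (rule limsup_to_lim)
    show "Limsup at_top (\<lambda>t. ereal (X t q / t)) \<le> 0" using H by (auto simp: not_less)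
    show "\<forall>\<^sub>F t in at_top. 0 \<le> X t q / t"
      using eventually_ge_at_top[of "0::real"] by eventually_elim (simp add: X_nonneg)
  qed
  have rho_nn: "0 \<le> rho q" for q
  proof (rule tendsto_lowerbound[OF load])
    show "\<forall>\<^sub>F t in at_top. 0 \<le> N t q / t"
      using eventually_ge_at_top[of "0::real"] by eventually_elim (simp add: N_nonneg)
  qed simp
  define I where "I t q = (LINT z:{0..t}|lborel. S z q)" for t q
  have Ilim: "((\<lambda>t. I t q / t) \<longlongrightarrow> rho q) at_top" for q
  proof -
    have "\<forall>\<^sub>F t in at_top. X0 q / t + N t q / t - X t q / t = I t q / t"
      using eventually_ge_at_top[of "0::real"]
      by eventually_elim (simp add: X_def I_def diff_divide_distrib add_divide_distrib)
    moreover have "((\<lambda>t. X0 q / t + N t q / t - X t q / t) \<longlongrightarrow> 0 + rho q - 0) at_top"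
      by (intro tendsto_intros load Xlim) real_asymp
    ultimately show ?thesis by (simp add: tendsto_cong)
  qed
  define A where "A = (\<lambda>t e s. {z. 0 \<le> z \<and> z \<le> t \<and> env z = e \<and> S z = s})"
  note dec = decomp[OF Sset_finite env_meas S_meas S_adm A_def]
  define w where "w = (\<lambda>(e,s) n. measure lborel (A (real n) e s) / real n)"
  define J where "J = (SIGMA e:UNIV. Sset e)"
  have "finite J" unfolding J_def using Sset_finite by auto
  have wnn: "0 \<le> w i n" for i n by (auto simp: w_def split: prod.splits)
  have wle: "w i n \<le> 1" for i n
  proof -
    obtain e s where i: "i = (e,s)" by fastforce
    have "emeasure lborel (A (real n) e s) \<le> emeasure lborel {0..real n}"
      by (rule emeasure_mono) (auto simp: A_def)
    then have "measure lborel (A (real n) e s) \<le> real n"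
      using dec(2)[of "real n" e s] by (simp add: measure_def enn2real_leI)
    then show ?thesis by (cases "n = 0") (auto simp: w_def i)
  qed
  have "bounded (range (w i))" for i
    unfolding bounded_iff using wnn wle by (intro exI[of _ 1]) auto
  then obtain r where r: "strict_mono r" and conv: "\<forall>i\<in>J. \<exists>l. (\<lambda>n. w i (r n)) \<longlonglongrightarrow> l"
    using simul_subseq[OF \<open>finite J\<close>] by blast
  then obtain l where l: "\<And>i. i \<in> J \<Longrightarrow> (\<lambda>n. w i (r n)) \<longlonglongrightarrow> l i"
    by metis
  have rseq: "filterlim (\<lambda>n. real (r n)) at_top sequentially"
    using filterlim_compose[OF filterlim_real_sequentially filterlim_subseq[OF r]] by (simp add: o_def)
  have rpos: "\<forall>\<^sub>F n in sequentially. 0 < real (r n)"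
    using eventually_ge_at_top[of "1::nat"]
  proof eventually_elim
    fix n :: nat assume "1 \<le> n"
    then have "1 \<le> r n" using seq_suble[OF r, of n] by linarith
    then show "0 < real (r n)" by simp
  qed
  have lnn: "0 \<le> l i" if "i \<in> J" for i
    by (rule tendsto_lowerbound[OF l[OF that]]) (auto simp: wnn)
  have lsum: "(\<Sum>s\<in>Sset e. l (e,s)) = piE e" for e
  proof (rule LIMSEQ_unique)
    show "(\<lambda>n. \<Sum>s\<in>Sset e. w (e,s) (r n)) \<longlonglongrightarrow> (\<Sum>s\<in>Sset e. l (e,s))"
      by (intro tendsto_sum l) (auto simp: J_def)
    have "\<forall>\<^sub>F n in sequentially. (LINT z:{0..real (r n)}|lborel. indicator {z. env z = e} z) / real (r n)
            = (\<Sum>s\<in>Sset e. w (e,s) (r n))"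
      using rpos by eventually_elim (simp add: dec(4) w_def sum_divide_distrib)
    moreover have "((\<lambda>n. (LINT z:{0..real (r n)}|lborel. indicator {z. env z = e} z) / real (r n)) \<longlongrightarrow> piE e) sequentially"
      using filterlim_compose[OF env_prop rseq] by (simp add: o_def)
    ultimately show "(\<lambda>n. \<Sum>s\<in>Sset e. w (e,s) (r n)) \<longlonglongrightarrow> piE e"
      by (simp add: tendsto_cong)
  qed
  have lrho: "(\<Sum>e\<in>UNIV. \<Sum>s\<in>Sset e. l (e,s) * s q) = rho q" for q
  proof (rule LIMSEQ_unique)
    show "(\<lambda>n. \<Sum>e\<in>UNIV. \<Sum>s\<in>Sset e. w (e,s) (r n) * s q) \<longlonglongrightarrow> (\<Sum>e\<in>UNIV. \<Sum>s\<in>Sset e. l (e,s) * s q)"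
      by (intro tendsto_sum tendsto_mult tendsto_const l) (auto simp: J_def)
    have "\<forall>\<^sub>F n in sequentially. I (real (r n)) q / real (r n)
            = (\<Sum>e\<in>UNIV. \<Sum>s\<in>Sset e. w (e,s) (r n) * s q)"
      using rpos by eventually_elim (simp add: I_def dec(3) w_def sum_divide_distrib)
    moreover have "((\<lambda>n. I (real (r n)) q / real (r n)) \<longlongrightarrow> rho q) sequentially"
      using filterlim_compose[OF Ilim rseq] by (simp add: o_def)
    ultimately show "(\<lambda>n. \<Sum>e\<in>UNIV. \<Sum>s\<in>Sset e. w (e,s) (r n) * s q) \<longlonglongrightarrow> rho q"
      by (simp add: tendsto_cong)
  qed
  define phi where "phi = (\<lambda>e s. l (e,s) / piE e)"
  have "rho \<in> stab_region Sset piE"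
    unfolding stab_region_def
  proof (intro CollectI conjI allI exI[of _ phi] ballI)
    show "0 \<le> rho q" for q by (rule rho_nn)
    show "0 \<le> phi e s" if "s \<in> Sset e" for e s
      using lnn[of "(e,s)"] that piE_pos[of e] by (auto simp: phi_def J_def)
    show "(\<Sum>s\<in>Sset e. phi e s) = 1" for e
      using lsum[of e] piE_pos[of e] by (simp add: phi_def flip: sum_divide_distrib)
    show "rho q \<le> (\<Sum>e\<in>UNIV. piE e * (\<Sum>s\<in>Sset e. phi e s * s q))" for q
    proof -
      have "(\<Sum>e\<in>UNIV. piE e * (\<Sum>s\<in>Sset e. phi e s * s q)) = (\<Sum>e\<in>UNIV. \<Sum>s\<in>Sset e. l (e,s) * s q)"
      proof (intro sum.cong refl)
        fix e
        have "piE e \<noteq> 0" using piE_pos[of e] by simp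
        then show "piE e * (\<Sum>s\<in>Sset e. phi e s * s q) = (\<Sum>s\<in>Sset e. l (e,s) * s q)"
          by (simp add: phi_def sum_distrib_left)
      qed
      then show ?thesis using lrho[of q] by simp
    qed
  qed
  with not_stable show False by simp
qed


end
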